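(* Let $d\ge1$ and $K\ge2$ be integers and let $\mathbf W^\star\in\mathrm{OB}(d,K)$ be a Softmax Code, with columns $\mathbf w_1^\star,\dots,\mathbf w_K^\star$. Then: (1) If $d=2$, the points are uniformly distributed on the unit circle: $\{\mathbf w_k^\star\}=\{(\cos(2\pi k/K+\alpha),\sin(2\pi k/K+\alpha)):k\in[K]\}$ for some $\alpha\in\mathbb R$. (2) If $K\le d+1$, the columns form a simplex equiangular tight frame: $\langle\mathbf w_k^\star,\mathbf w_{k'}^\star\rangle=-\tfrac{1}{K-1}$ for all $k\ne k'$, i.e. $(\mathbf W^\star)^\top\mathbf W^\star=\tfrac{K}{K-1}\big(\mathbf I_K-\tfrac1K\mathbf 1_K\mathbf 1_K^\top\big)$. (3) If $d+1<K\le 2d$, then $\rho_{\text{one-vs-rest}}(\mathbf W^\star)=1$; this value is attained, for instance, when the columns are $K$ distinct vertices of the cross-polytope $\{\pm\mathbf e_1,\dots,\pm\mathbf e_d\}$.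
   Context: $\mathrm{OB}(d,K)$ is the set of real $d\times K$ matrices with unit-norm columns. For a point $\mathbf v$ and finite set $\mathcal W$, $\operatorname{dist}(\mathbf v,\mathcal W)=\inf\{\|\mathbf v-\mathbf w\|_2:\mathbf w\in\operatorname{conv}(\mathcal W)\}$. $\rho_{\text{one-vs-rest}}(\mathbf W)=\min_{k}\operatorname{dist}(\mathbf w_k,\{\mathbf w_j\}_{j\ne k})$. A Softmax Code is any $\mathbf W\in\operatorname{argmax}_{\mathbf W\in\mathrm{OB}(d,K)}\rho_{\text{one-vs-rest}}(\mathbf W)$. $\mathbf e_i$ are the standard basis vectors of $\mathbb R^d$. *)

theory Defs
  imports "HOL-Analysis.Analysis"
begin

text \<open>A configuration of K points W 0, ..., W (K-1) in R^d (the columns of W).\<close>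

definition oblique :: "nat \<Rightarrow> (nat \<Rightarrow> 'a::real_normed_vector) \<Rightarrow> bool" where
  "oblique K W \<longleftrightarrow> (\<forall>k<K. norm (W k) = 1)"

definition dist_conv :: "'a::euclidean_space \<Rightarrow> 'a set \<Rightarrow> real" where
  "dist_conv v S = infdist v (convex hull S)"

definition rho_ovr :: "nat \<Rightarrow> (nat \<Rightarrow> 'a::euclidean_space) \<Rightarrow> real" where
  "rho_ovr K W = (MIN k\<in>{..<K}. dist_conv (W k) (W ` ({..<K} - {k})))"

definition softmax_code :: "nat \<Rightarrow> (nat \<Rightarrow> 'a::euclidean_space) \<Rightarrow> bool" where
  "softmax_code K W \<longleftrightarrow> oblique K W \<and>
     (\<forall>V::nat \<Rightarrow> 'a. oblique K V \<longrightarrow> rho_ovr K V \<le> rho_ovr K W)"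

end

theory Submission
  imports Defs
begin


lemma rho_le:
  assumes "k < K" shows "rho_ovr K W \<le> dist_conv (W k) (W ` ({..<K} - {k}))"
  unfolding rho_ovr_def using assms by (intro Min_le) auto

lemma rho_ge:
  assumes "0 < K" "\<And>k. k < K \<Longrightarrow> c \<le> dist_conv (W k) (W ` ({..<K} - {k}))"
  shows "c \<le> rho_ovr K W"
  unfolding rho_ovr_def using assms by (subst Min_ge_iff) auto

lemma infdist_hull_ge:
  fixes x :: "'a::euclidean_space"
  assumes "norm x = 1" "S \<noteq> {}" "\<forall>y\<in>S. inner x y \<le> t"
  shows "1 - t \<le> infdist x (convex hull S)"
proof -
  have sub: "convex hull S \<subseteq> {y. inner x y \<le> t}"
    using assms(3) by (intro hull_minimal) (auto simp: convex_halfspace_le)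
  have "1 - t \<le> dist x y" if "y \<in> convex hull S" for y
  proof -
    have "inner x y \<le> t" using sub that by auto
    moreover have "inner x (x - y) \<le> norm x * norm (x - y)" by (rule norm_cauchy_schwarz)
    moreover have "inner x x = 1" using assms(1) by (simp add: norm_eq_sqrt_inner)
    ultimately show ?thesis using assms(1) by (simp add: dist_norm inner_diff_right)
  qed
  moreover have "convex hull S \<noteq> {}" using assms(2) by simp
  ultimately show ?thesis by (simp add: infdist_notempty cINF_greatest)
qed

lemma hull_sep:
  fixes x :: "'a::euclidean_space"
  assumes "finite S" "S \<noteq> {}" "0 < c" "c \<le> infdist x (convex hull S)"
  shows "\<exists>u. norm u = 1 \<and> (\<forall>y\<in>S. c \<le> inner u x - inner u y)"
proof -
  have cl: "closed (convex hull S)" using assms(1)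
    by (simp add: compact_imp_closed finite_imp_compact_convex_hull)
  obtain p where p: "p \<in> convex hull S" "infdist x (convex hull S) = dist x p"
    using infdist_attains_inf[OF cl] assms(2) by auto
  have cp: "inner (x - p) (y - p) \<le> 0" if "y \<in> convex hull S" for y
    by (rule any_closest_point_dot[OF convex_convex_hull cl p(1) that])
       (metis infdist_le p(2))
  define r where "r = norm (x - p)"
  have r: "c \<le> r" using assms(4) p(2) by (simp add: r_def dist_norm)
  hence rpos: "0 < r" using assms(3) by simp
  define u where "u = (1/r) *\<^sub>R (x - p)"
  have "norm u = 1" using rpos by (simp add: u_def r_def)
  moreover have "c \<le> inner u x - inner u y" if "y \<in> S" for y
  proof -
    have "inner (x - p) (y - p) \<le> 0" using cp that by (simp add: hull_inc)
    moreover have "inner (x - p) (x - p) = r * r" by (simp add: r_def dot_square_norm power2_eq_square)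
    ultimately have "r * r \<le> inner (x - p) x - inner (x - p) y"
      by (simp add: inner_diff_right inner_diff_left algebra_simps)
    hence "r \<le> (inner (x - p) x - inner (x - p) y) / r" using rpos
      by (simp add: pos_le_divide_eq)
    thus ?thesis using r by (simp add: u_def inner_diff_right diff_divide_distrib)
  qed
  ultimately show ?thesis by blast
qed

lemma rho_le_one:
  fixes W :: "nat \<Rightarrow> 'a::euclidean_space"
  assumes ob: "oblique K W" and K: "DIM('a) + 2 \<le> K"
  shows "rho_ovr K W \<le> 1"
proof (cases "inj_on W {..<K}")
  case False
  then obtain k j where kj: "k < K" "j < K" "k \<noteq> j" "W k = W j"
    unfolding inj_on_def by auto
  have "W k \<in> convex hull (W ` ({..<K} - {k}))"
    using kj by (intro hull_inc) auto
  hence "dist_conv (W k) (W ` ({..<K} - {k})) = 0" by (simp add: dist_conv_def)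
  thus ?thesis using rho_le[OF kj(1), of W] by simp
next
  case True
  define C where "C = W ` {..<K}"
  have fin: "finite C" by (simp add: C_def)
  have "card C = K" using True by (simp add: C_def card_image)
  hence "affine_dependent C" using K fin by (intro affine_dependent_biggerset) auto
  then obtain M P where MP: "M \<inter> P = {}" "M \<union> P = C" "convex hull M \<inter> convex hull P \<noteq> {}"
    using Radon_partition[OF fin] by blast
  then obtain z where z: "z \<in> convex hull M" "z \<in> convex hull P" by blast
  have finM: "finite M" using MP fin by (metis finite_Un)
  have "M \<noteq> {}" using z by auto
  obtain u where u: "\<forall>x\<in>M. 0 \<le> u x" "sum u M = 1" "(\<Sum>x\<in>M. u x *\<^sub>R x) = z"
    using z(1) finM by (auto simp: convex_hull_finite)
  define f where "f x = inner z z - 2 * inner x z" for x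
  have "(\<Sum>x\<in>M. u x * f x) = inner z z * sum u M - 2 * inner (\<Sum>x\<in>M. u x *\<^sub>R x) z"
    by (simp add: f_def sum_distrib_left sum_distrib_right sum_subtractf algebra_simps inner_sum_left)
  also have "\<dots> = - inner z z" using u by simp
  finally have sumf: "(\<Sum>x\<in>M. u x * f x) \<le> 0" by simp
  have "\<exists>x\<in>M. f x \<le> 0"
  proof (rule ccontr)
    assume "\<not> ?thesis"
    hence pos: "\<forall>x\<in>M. 0 < f x" by auto
    have "(\<Sum>x\<in>M. u x * Min (f ` M)) \<le> (\<Sum>x\<in>M. u x * f x)"
      using u(1) finM by (intro sum_mono mult_left_mono) auto
    moreover have "0 < Min (f ` M)" using pos finM \<open>M \<noteq> {}\<close> by (subst Min_gr_iff) auto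
    ultimately show False using sumf u(2) by (simp add: sum_distrib_right[symmetric])
  qed
  then obtain x where x: "x \<in> M" "f x \<le> 0" by blast
  have "x \<in> W ` {..<K}" using MP x(1) by (auto simp: C_def)
  then obtain k where k: "k < K" "W k = x" by auto
  have "P \<subseteq> W ` ({..<K} - {k})"
  proof
    fix y assume "y \<in> P"
    have "y \<in> W ` {..<K}" using MP \<open>y \<in> P\<close> by (auto simp: C_def)
    then obtain j where "j < K" "W j = y" by auto
    moreover have "y \<noteq> x" using MP x \<open>y \<in> P\<close> by auto
    ultimately show "y \<in> W ` ({..<K} - {k})" using k by auto
  qed
  hence zin: "z \<in> convex hull (W ` ({..<K} - {k}))" using z(2) hull_mono by blast
  have "inner x x = 1" using ob k unfolding oblique_def by (metis norm_eq_1)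
  hence "dist x z ^ 2 \<le> 1" using x(2)
    by (simp add: f_def dist_norm power2_norm_eq_inner inner_diff_left inner_diff_right inner_commute)
  hence "dist x z \<le> 1" by (simp add: power_le_one_iff)
  hence "dist_conv (W k) (W ` ({..<K} - {k})) \<le> 1"
    unfolding dist_conv_def using k zin by (metis infdist_le2)
  thus ?thesis using rho_le[OF k(1), of W] by simp
qed



lemma cross_inner:
  fixes a b :: "real^'n"
  assumes "\<exists>i. a = axis i 1 \<or> a = - axis i 1" "\<exists>i. b = axis i 1 \<or> b = - axis i 1" "a \<noteq> b"
  shows "inner a b \<le> 0"
  using assms by (auto simp: inner_axis_axis axis_eq_axis)

lemma cross_rho_ge:
  fixes V :: "nat \<Rightarrow> real^'n"
  assumes inj: "inj_on V {..<K}" and cr: "\<forall>k<K. \<exists>i. V k = axis i 1 \<or> V k = - axis i 1"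
    and K: "2 \<le> K"
  shows "1 \<le> rho_ovr K V"
proof (rule rho_ge)
  show "0 < K" using K by simp
  fix k assume k: "k < K"
  have n: "norm (V k) = 1" using cr k by fastforce
  have ne: "V ` ({..<K} - {k}) \<noteq> {}"
  proof -
    have "(if k = 0 then 1 else 0) \<in> {..<K} - {k}" using K by auto
    thus ?thesis by blast
  qed
  have "\<forall>y\<in>V ` ({..<K} - {k}). inner (V k) y \<le> 0"
  proof
    fix y assume "y \<in> V ` ({..<K} - {k})"
    then obtain j where j: "j < K" "j \<noteq> k" "y = V j" by auto
    have "V j \<noteq> V k" using inj j k unfolding inj_on_def by auto
    thus "inner (V k) y \<le> 0" using cr j k by (intro cross_inner) auto
  qed
  from infdist_hull_ge[OF n ne this] show "1 \<le> dist_conv (V k) (V ` ({..<K} - {k}))"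
    by (simp add: dist_conv_def)
qed

lemma cross_exists:
  assumes "K \<le> 2 * CARD('n::finite)"
  shows "\<exists>V :: nat \<Rightarrow> real^'n. inj_on V {..<K} \<and> (\<forall>k<K. \<exists>i. V k = axis i 1 \<or> V k = - axis i 1)"
proof -
  obtain g :: "nat \<Rightarrow> 'n" where g: "bij_betw g {0..<CARD('n)} UNIV"
    using ex_bij_betw_nat_finite[of "UNIV :: 'n set"] by auto
  define d where "d = CARD('n)"
  define V :: "nat \<Rightarrow> real^'n" where "V k = (if k < d then axis (g k) 1 else - axis (g (k - d)) 1)" for k
  have ginj: "g a = g b \<Longrightarrow> a < d \<Longrightarrow> b < d \<Longrightarrow> a = b" for a b
    using g unfolding bij_betw_def inj_on_def d_def by auto
  have "inj_on V {..<K}"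
  proof (rule inj_onI)
    fix a b assume ab: "a \<in> {..<K}" "b \<in> {..<K}" "V a = V b"
    show "a = b"
    proof (cases "a < d"; cases "b < d")
      assume "a < d" "b < d" thus ?thesis using ab ginj by (auto simp: V_def axis_eq_axis)
    next
      assume "a < d" "\<not> b < d" thus ?thesis using ab
        by (auto simp: V_def vec_eq_iff axis_def split: if_splits)
    next
      assume "\<not> a < d" "b < d" thus ?thesis using ab
        by (auto simp: V_def vec_eq_iff axis_def split: if_splits)
    next
      assume "\<not> a < d" "\<not> b < d"
      hence "g (a - d) = g (b - d)" using ab by (auto simp: V_def axis_eq_axis)
      thus ?thesis using ab assms \<open>\<not> a < d\<close> \<open>\<not> b < d\<close> ginj[of "a - d" "b - d"]
        by (simp add: d_def) linarith
    qed
  qed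
  moreover have "\<forall>k<K. \<exists>i. V k = axis i 1 \<or> V k = - axis i 1" by (auto simp: V_def)
  ultimately show ?thesis by blast
qed

lemma part3:
  fixes W :: "nat \<Rightarrow> real^'n"
  assumes sc: "softmax_code K W" and K1: "CARD('n) + 1 < K" and K2: "K \<le> 2 * CARD('n)"
  shows "rho_ovr K W = 1 \<and> (\<forall>V :: nat \<Rightarrow> real^'n. inj_on V {..<K} \<longrightarrow>
              (\<forall>k<K. \<exists>i. V k = axis i 1 \<or> V k = - axis i 1) \<longrightarrow> rho_ovr K V = 1)"
proof -
  have Vone: "rho_ovr K V = 1" if "inj_on V {..<K}" "\<forall>k<K. \<exists>i. V k = axis i 1 \<or> V k = - axis i 1"
    for V :: "nat \<Rightarrow> real^'n"
  proof -
    have "oblique K V" using that(2) unfolding oblique_def by fastforce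
    hence "rho_ovr K V \<le> 1" using K1 by (intro rho_le_one) auto
    moreover have "1 \<le> rho_ovr K V" using that K1 by (intro cross_rho_ge) auto
    ultimately show ?thesis by simp
  qed
  obtain V0 :: "nat \<Rightarrow> real^'n" where V0: "inj_on V0 {..<K}" "\<forall>k<K. \<exists>i. V0 k = axis i 1 \<or> V0 k = - axis i 1"
    using cross_exists[OF K2] by blast
  have "oblique K V0" using V0(2) unfolding oblique_def by fastforce
  hence "rho_ovr K V0 \<le> rho_ovr K W" using sc unfolding softmax_code_def by blast
  hence "1 \<le> rho_ovr K W" using Vone[OF V0] by simp
  moreover have "rho_ovr K W \<le> 1" using sc K1 unfolding softmax_code_def by (intro rho_le_one) auto
  ultimately show ?thesis using Vone by auto
qed



lemma etf_exists:
  assumes K: "2 \<le> K" "K \<le> CARD('n::finite) + 1"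
  shows "\<exists>E :: nat \<Rightarrow> real^'n. oblique K E \<and> (\<forall>k<K. \<forall>j<K. j \<noteq> k \<longrightarrow> inner (E k) (E j) = - 1 / (real K - 1))"
proof -
  define m where "m = K - 1"
  have m1: "1 \<le> m" and mK: "real m = real K - 1" using K by (auto simp: m_def)
  obtain f :: "nat \<Rightarrow> 'n" where f: "f ` {..<m} \<subseteq> UNIV" "inj_on f {..<m}"
  proof -
    have "m \<le> CARD('n)" using K by (simp add: m_def)
    then obtain f :: "nat \<Rightarrow> 'n" where "inj_on f {..<m}"
      using card_le_inj[of "{..<m}" "UNIV :: 'n set"] by auto
    thus ?thesis using that by auto
  qed
  define e :: "nat \<Rightarrow> real^'n" where "e j = axis (f j) 1" for j
  define one where "one = (\<Sum>j<m. e j)"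
  have ee: "inner (e i) (e j) = (if i = j then 1 else 0)" if "i < m" "j < m" for i j
    using f(2) that by (auto simp: e_def inner_axis_axis inj_on_def)
  have eo: "inner (e i) one = 1" if "i < m" for i
    using that by (simp add: one_def inner_sum_right ee)
  have oe: "inner one (e i) = 1" if "i < m" for i
    using eo[OF that] by (simp add: inner_commute)
  have oo: "inner one one = real m"
  proof -
    have "inner one one = (\<Sum>j<m. inner (e j) one)" by (simp add: one_def inner_sum_left)
    also have "\<dots> = real m" by (simp add: eo)
    finally show ?thesis .
  qed
  define s where "s = sqrt (real m)"
  define t where "t = sqrt (real m + 1)"
  have s2: "s * s = real m" and t2: "t * t = real m + 1" and spos: "0 < s" and mpos: "0 < real m"
    using m1 by (auto simp: s_def t_def)
  have ss: "s * (s * x) = real m * x" "t * (t * x) = (1 + real m) * x" for x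
    using s2 t2 by (metis mult.assoc, simp add: mult.assoc[symmetric])
  define \<alpha> where "\<alpha> = t / s"
  define \<beta> where "\<beta> = (t + 1) / (s * real m)"
  define \<gamma> where "\<gamma> = 1 / s"
  have i1: "\<alpha> * \<alpha> - 2 * \<alpha> * \<beta> + \<beta> * \<beta> * real m = 1"
    unfolding \<alpha>_def \<beta>_def using s2 t2 spos mpos
    by (simp add: field_simps) (simp add: ss algebra_simps)
  have i2: "- 2 * \<alpha> * \<beta> + \<beta> * \<beta> * real m = - 1 / real m"
    unfolding \<alpha>_def \<beta>_def using s2 t2 spos mpos
    by (simp add: field_simps) (simp add: ss algebra_simps)
  have i3: "\<gamma> * (\<alpha> - \<beta> * real m) = - 1 / real m"
    unfolding \<alpha>_def \<beta>_def \<gamma>_def using s2 t2 spos mpos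
    by (simp add: field_simps)
  have i4: "\<gamma> * \<gamma> * real m = 1"
    unfolding \<gamma>_def using s2 spos mpos by (simp add: field_simps)
  define E where "E k = (if k < m then \<alpha> *\<^sub>R e k - \<beta> *\<^sub>R one else \<gamma> *\<^sub>R one)" for k
  have EE: "inner (E k) (E j) = (if k = j then 1 else - 1 / real m)" if "k < K" "j < K" for k j
  proof -
    have A: "inner (\<alpha> *\<^sub>R e k - \<beta> *\<^sub>R one) (\<alpha> *\<^sub>R e j - \<beta> *\<^sub>R one)
        = \<alpha> * \<alpha> * inner (e k) (e j) - 2 * \<alpha> * \<beta> + \<beta> * \<beta> * real m" if "k < m" "j < m"
      using that by (simp add: inner_diff_left inner_diff_right eo oe oo algebra_simps)
    have B: "inner (\<alpha> *\<^sub>R e q - \<beta> *\<^sub>R one) (\<gamma> *\<^sub>R one) = \<gamma> * (\<alpha> - \<beta> * real m)" if "q < m" for q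
      using that by (simp add: inner_diff_left eo oo algebra_simps)
    show ?thesis
    proof (cases "k < m"; cases "j < m")
      assume "k < m" "j < m" thus ?thesis using A i1 i2 ee by (auto simp: E_def)
    next
      assume "k < m" "\<not> j < m" thus ?thesis using B i3 by (auto simp: E_def)
    next
      assume "\<not> k < m" "j < m"
      hence "inner (E k) (E j) = inner (E j) (E k)" by (simp add: inner_commute)
      thus ?thesis using B[of j] i3 \<open>\<not> k < m\<close> \<open>j < m\<close> by (auto simp: E_def)
    next
      assume "\<not> k < m" "\<not> j < m" hence "k = j" using that by (auto simp: m_def)
      thus ?thesis using i4 oo \<open>\<not> k < m\<close> by (simp add: E_def algebra_simps)
    qed
  qed
  have "oblique K E" unfolding oblique_def using EE by (simp add: norm_eq_1)
  moreover have "\<forall>k<K. \<forall>j<K. j \<noteq> k \<longrightarrow> inner (E k) (E j) = - 1 / (real K - 1)"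
    using EE mK by auto
  ultimately show ?thesis by blast
qed



lemma part2:
  fixes W :: "nat \<Rightarrow> real^'n"
  assumes sc: "softmax_code K W" and K1: "K \<le> CARD('n) + 1" and K2: "2 \<le> K"
  shows "\<forall>k<K. \<forall>k'<K. k \<noteq> k' \<longrightarrow> inner (W k) (W k') = - 1 / (real K - 1)"
proof -
  define R where "R = real K"
  have R2: "2 \<le> R" using K2 by (simp add: R_def)
  define r where "r = 1 + 1 / (R - 1)"
  have rR: "r * (R - 1) = R" using R2 by (simp add: r_def field_simps)
  have ne: "{..<K} - {k} \<noteq> {}" for k
  proof -
    have "(if k = 0 then 1 else 0) \<in> {..<K} - {k}" using K2 by auto
    thus ?thesis by blast
  qed
  have cardk: "card ({..<K} - {k}) = K - 1" if "k < K" for k using that by simp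
  obtain E :: "nat \<Rightarrow> real^'n" where E: "oblique K E"
     "\<forall>k<K. \<forall>j<K. j \<noteq> k \<longrightarrow> inner (E k) (E j) = - 1 / (real K - 1)"
    using etf_exists[OF K2 K1] by blast
  have "r \<le> rho_ovr K E"
  proof (rule rho_ge)
    show "0 < K" using K2 by simp
    fix k assume k: "k < K"
    have n: "norm (E k) = 1" using E(1) k by (simp add: oblique_def)
    have "\<forall>y\<in>E ` ({..<K} - {k}). inner (E k) y \<le> - 1 / (R - 1)"
      using E(2) k by (auto simp: R_def)
    from infdist_hull_ge[OF n _ this] ne[of k]
    show "r \<le> dist_conv (E k) (E ` ({..<K} - {k}))" by (simp add: dist_conv_def r_def)
  qed
  also have "\<dots> \<le> rho_ovr K W" using sc E(1) unfolding softmax_code_def by blast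
  finally have rW: "r \<le> rho_ovr K W" .
  have ob: "inner (W k) (W k) = 1" if "k < K" for k
    using sc that by (simp add: softmax_code_def oblique_def norm_eq_1)
  have dk: "r \<le> infdist (W k) (convex hull (W ` ({..<K} - {k})))" if "k < K" for k
    using rW rho_le[OF that, of W] by (simp add: dist_conv_def)
  define S where "S = (\<Sum>j<K. W j)"
  define c where "c k = (\<Sum>j\<in>{..<K} - {k}. (1 / (R - 1)) *\<^sub>R W j)" for k
  have cS: "c k = (1 / (R - 1)) *\<^sub>R (S - W k)" if "k < K" for k
    using that by (simp add: c_def S_def scaleR_sum_right[symmetric] sum_diff1)
  have cin: "c k \<in> convex hull (W ` ({..<K} - {k}))" if "k < K" for k
    unfolding c_def
  proof (rule convex_sum)
    show "(\<Sum>i\<in>{..<K} - {k}. 1 / (R - 1)) = 1" using that R2 by (simp add: cardk R_def of_nat_diff)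
  qed (use R2 in \<open>auto intro: hull_inc\<close>)
  have Wc: "W k - c k = (1 / (R - 1)) *\<^sub>R (R *\<^sub>R W k - S)" if "k < K" for k
  proof -
    have e: "1 + 1/(R-1) = (1/(R-1)) * R" using R2 by (simp add: field_simps)
    have "W k - c k = W k + (1/(R-1)) *\<^sub>R W k - (1/(R-1)) *\<^sub>R S" by (simp add: cS[OF that] algebra_simps)
    also have "\<dots> = (1 + 1/(R-1)) *\<^sub>R W k - (1/(R-1)) *\<^sub>R S" by (simp add: scaleR_left_distrib)
    also have "\<dots> = (1 / (R - 1)) *\<^sub>R (R *\<^sub>R W k - S)" by (simp only: e scaleR_diff_right scaleR_scaleR)
    finally show ?thesis .
  qed
  have big: "R \<le> norm (R *\<^sub>R W k - S)" if "k < K" for k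
  proof -
    have "r \<le> dist (W k) (c k)" using dk[OF that] infdist_le[OF cin[OF that], of "W k"] by linarith
    also have "\<dots> = norm (R *\<^sub>R W k - S) / (R - 1)" using R2
      by (simp add: dist_norm Wc[OF that])
    finally show ?thesis using R2 rR by (simp add: pos_le_divide_eq mult.commute)
  qed
  have sq: "norm (R *\<^sub>R W k - S) ^ 2 = R * R - 2 * R * inner (W k) S + inner S S" if "k < K" for k
    using ob[OF that] by (simp add: power2_norm_eq_inner inner_diff_left inner_diff_right inner_commute algebra_simps)
  have "(\<Sum>k<K. R * R) \<le> (\<Sum>k<K. norm (R *\<^sub>R W k - S) ^ 2)"
  proof (rule sum_mono)
    fix k assume "k \<in> {..<K}"
    hence "R \<le> norm (R *\<^sub>R W k - S)" using big by auto
    thus "R * R \<le> norm (R *\<^sub>R W k - S) ^ 2" using R2 by (simp add: power2_eq_square mult_mono)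
  qed
  also have "\<dots> = (\<Sum>k<K. R * R - 2 * R * inner (W k) S + inner S S)" using sq by simp
  also have "\<dots> = R * R * R - 2 * R * inner S S + R * inner S S"
    by (simp add: sum.distrib sum_subtractf sum_distrib_left[symmetric] S_def[symmetric] inner_sum_left[symmetric] R_def)
  finally have "R * inner S S \<le> 0" by (simp add: R_def)
  hence S0: "S = 0" using R2 by (simp add: mult_le_0_iff) (meson inner_ge_zero inner_eq_zero_iff order_antisym)
  show ?thesis
  proof (intro allI impI)
    fix k k' assume kk: "k < K" "k' < K" "k \<noteq> k'"
    have ck: "c k = (- 1 / (R - 1)) *\<^sub>R W k" using cS[OF kk(1)] S0 by simp
    have wk: "W k - c k = r *\<^sub>R W k" using ck by (simp add: r_def algebra_simps)
    have ndk: "dist (W k) (c k) = r" using wk ob[OF kk(1)] R2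
      by (simp add: dist_norm norm_eq_sqrt_inner r_def)
    have le: "inner (W k) (W j) \<le> - 1 / (R - 1)" if j: "j < K" "j \<noteq> k" for j
    proof -
      have cl: "closed (convex hull (W ` ({..<K} - {k})))"
        by (simp add: compact_imp_closed finite_imp_compact_convex_hull)
      have "inner (W k - c k) (W j - c k) \<le> 0"
      proof (rule any_closest_point_dot[OF convex_convex_hull cl cin[OF kk(1)]])
        show "W j \<in> convex hull (W ` ({..<K} - {k}))" using j by (intro hull_inc) auto
        show "\<forall>z\<in>convex hull (W ` ({..<K} - {k})). dist (W k) (c k) \<le> dist (W k) z"
          using ndk dk[OF kk(1)] infdist_le by (metis order_trans)
      qed
      hence "r * (inner (W k) (W j) - inner (W k) (c k)) \<le> 0" by (simp add: wk inner_diff_right right_diff_distrib)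
      moreover have "0 < r" using R2 by (simp add: r_def add_pos_pos)
      ultimately have "inner (W k) (W j) \<le> inner (W k) (c k)" by (simp add: mult_le_0_iff)
      thus ?thesis using ck ob[OF kk(1)] by simp
    qed
    have "(\<Sum>j\<in>{..<K} - {k}. inner (W k) (W j)) = inner (W k) (S - W k)"
      by (simp add: S_def inner_sum_right sum_diff1 kk(1) inner_diff_right)
    also have "\<dots> = -1" using S0 ob[OF kk(1)] by simp
    finally have s1: "(\<Sum>j\<in>{..<K} - {k}. inner (W k) (W j)) = -1" .
    have "(\<Sum>j\<in>{..<K} - {k}. - 1 / (R - 1) - inner (W k) (W j)) = 0"
      using s1 kk(1) R2 by (simp add: sum_subtractf cardk R_def of_nat_diff)
    hence "\<forall>j\<in>{..<K} - {k}. - 1 / (R - 1) - inner (W k) (W j) = 0"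
      using le by (subst sum_nonneg_eq_0_iff[symmetric]) auto
    moreover have "k' \<in> {..<K} - {k}" using kk by auto
    ultimately have "- 1 / (R - 1) - inner (W k) (W k') = 0" by blast
    thus "inner (W k) (W k') = - 1 / (real K - 1)" by (simp add: R_def)
  qed
qed



definition pt :: "real \<Rightarrow> real^2" where "pt t = vector [cos t, sin t]"

lemma pt_inner: "inner (pt s) (pt t) = cos (s - t)"
  by (simp add: pt_def inner_vec_def sum_2 cos_diff)

lemma pt_norm [simp]: "norm (pt t) = 1"
  by (simp add: norm_eq_1 pt_inner)

lemma pt_eq_iff: "pt s = pt t \<longleftrightarrow> cos s = cos t \<and> sin s = sin t"
  by (auto simp: pt_def vec_eq_iff forall_2)

lemma pt_2pi: "pt (t + 2 * pi) = pt t" "pt (t - 2 * pi) = pt t"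
  by (simp_all add: pt_eq_iff cos_diff sin_diff)

lemma unit_pt:
  fixes x :: "real^2"
  assumes "norm x = 1"
  shows "\<exists>t. 0 \<le> t \<and> t < 2 * pi \<and> x = pt t"
proof -
  have "(x$1)\<^sup>2 + (x$2)\<^sup>2 = 1" using assms
    by (simp add: norm_eq_1 inner_vec_def sum_2 power2_eq_square)
  then obtain t where "0 \<le> t" "t < 2 * pi" "x$1 = cos t" "x$2 = sin t"
    using sincos_total_2pi by metis
  moreover have "x = pt t" using calculation by (simp add: pt_def vec_eq_iff forall_2)
  ultimately show ?thesis by blast
qed

lemma cot_strict_decr:
  assumes "0 < a" "a < b" "b < pi"
  shows "cos b / sin b < cos a / sin a"
proof -
  have sa: "0 < sin a" and sb: "0 < sin b" using assms by (auto intro: sin_gt_zero)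
  have "0 < sin (b - a)" using assms by (intro sin_gt_zero) auto
  hence "cos b * sin a < cos a * sin b" by (simp add: sin_diff algebra_simps)
  thus ?thesis using sa sb by (simp add: divide_simps mult.commute)
qed

lemma ln_sin_tangent:
  assumes y0: "0 < y0" "y0 < pi" and y: "0 < y" "y < pi" and ne: "y \<noteq> y0"
  shows "ln (sin y) < ln (sin y0) + cos y0 / sin y0 * (y - y0)"
proof -
  have der: "DERIV (\<lambda>x. ln (sin x)) x :> cos x / sin x" if "0 < x" "x < pi" for x
  proof -
    have "0 < sin x" using that by (intro sin_gt_zero) auto
    thus ?thesis by (auto intro!: derivative_eq_intros simp: field_simps)
  qed
  show ?thesis
  proof (cases "y < y0")
    case True
    obtain z where z: "y < z" "z < y0" "ln (sin y0) - ln (sin y) = (y0 - y) * (cos z / sin z)"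
      using MVT2[OF True, of "\<lambda>x. ln (sin x)" "\<lambda>x. cos x / sin x"] der y y0 by force
    have "cos y0 / sin y0 < cos z / sin z" using z y y0 by (intro cot_strict_decr) auto
    hence "(y0 - y) * (cos y0 / sin y0) < (y0 - y) * (cos z / sin z)" using True by (intro mult_strict_left_mono) auto
    moreover have "cos y0 / sin y0 * (y - y0) = - ((y0 - y) * (cos y0 / sin y0))" by (metis minus_diff_eq mult_minus_left mult.commute)
    ultimately show ?thesis using z(3) by linarith
  next
    case False
    hence lt: "y0 < y" using ne by simp
    obtain z where z: "y0 < z" "z < y" "ln (sin y) - ln (sin y0) = (y - y0) * (cos z / sin z)"
      using MVT2[OF lt, of "\<lambda>x. ln (sin x)" "\<lambda>x. cos x / sin x"] der y y0 by force
    have "cos z / sin z < cos y0 / sin y0" using z y y0 by (intro cot_strict_decr) auto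
    hence "(y - y0) * (cos z / sin z) < (y - y0) * (cos y0 / sin y0)" using lt by (intro mult_strict_left_mono) auto
    moreover have "cos y0 / sin y0 * (y - y0) = (y - y0) * (cos y0 / sin y0)" by (simp add: algebra_simps)
    ultimately show ?thesis using z(3) by linarith
  qed
qed

lemma ln_sin_tangent_le:
  assumes "0 < y0" "y0 < pi" "0 < y" "y < pi"
  shows "ln (sin y) \<le> ln (sin y0) + cos y0 / sin y0 * (y - y0)"
  using ln_sin_tangent[OF assms] by (cases "y = y0") auto

lemma local_ineq:
  assumes c: "0 < c" and A: "0 < A" "A < 2 * pi" and B: "0 < B" "B < 2 * pi"
    and h1: "c \<le> cos \<phi> - cos (\<phi> - A)" and h2: "c \<le> cos \<phi> - cos (\<phi> + B)"
  shows "c * c \<le> 4 * sin (A/2) * sin (B/2) * (sin ((A + B) / 4))\<^sup>2"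
proof -
  have e1: "cos \<phi> - cos (\<phi> - A) = 2 * sin (A/2) * (- sin (\<phi> - A/2))"
  proof -
    have "cos \<phi> = cos ((\<phi> - A/2) + A/2)" and "cos (\<phi> - A) = cos ((\<phi> - A/2) - A/2)" by simp_all
    thus ?thesis by (simp only: cos_add cos_diff) (simp add: algebra_simps)
  qed
  have e2: "cos \<phi> - cos (\<phi> + B) = 2 * sin (B/2) * sin (\<phi> + B/2)"
  proof -
    have "cos \<phi> = cos ((\<phi> + B/2) - B/2)" and "cos (\<phi> + B) = cos ((\<phi> + B/2) + B/2)" by (simp_all add: add.assoc)
    thus ?thesis by (simp only: cos_add cos_diff) (simp add: algebra_simps)
  qed
  have sA: "0 < sin (A/2)" and sB: "0 < sin (B/2)" using A B by (auto intro: sin_gt_zero)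
  have "c * c \<le> (cos \<phi> - cos (\<phi> - A)) * (cos \<phi> - cos (\<phi> + B))"
    using h1 h2 c by (intro mult_mono) auto
  also have "\<dots> = 4 * sin (A/2) * sin (B/2) * (- sin (\<phi> - A/2) * sin (\<phi> + B/2))"
    by (simp add: e1 e2)
  also have "- sin (\<phi> - A/2) * sin (\<phi> + B/2) \<le> (sin ((A + B) / 4))\<^sup>2"
  proof -
    have "- sin (\<phi> - A/2) * sin (\<phi> + B/2) = (cos ((\<phi> - A/2) + (\<phi> + B/2)) - cos ((\<phi> - A/2) - (\<phi> + B/2))) / 2"
    proof -
      have g: "- sin u * sin v = (cos (u + v) - cos (u - v)) / 2" for u v :: real
        by (simp add: cos_add cos_diff)
      show ?thesis by (rule g)
    qed
    also have "\<dots> \<le> (1 - cos ((\<phi> - A/2) - (\<phi> + B/2))) / 2" by simp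
    also have "(\<phi> - A/2) - (\<phi> + B/2) = - (2 * ((A + B) / 4))" by (simp add: field_simps)
    also have "(1 - cos (- (2 * ((A + B) / 4)))) / 2 = (sin ((A + B) / 4))\<^sup>2"
      by (simp only: cos_minus cos_double_sin) simp
    finally show ?thesis .
  qed
  hence "4 * sin (A/2) * sin (B/2) * (- sin (\<phi> - A/2) * sin (\<phi> + B/2))
      \<le> 4 * sin (A/2) * sin (B/2) * (sin ((A + B) / 4))\<^sup>2"
    using sA sB by (intro mult_left_mono) auto
  finally show ?thesis .
qed



lemma cos_le_step:
  assumes K: "2 \<le> K" and y: "2 * pi / real K \<le> y" "y \<le> 2 * pi - 2 * pi / real K"
  shows "cos y \<le> cos (2 * pi / real K)"
proof -
  have K0: "0 < real K" using K by simp
  have st: "2 * pi / real K \<le> pi" using K by (simp add: field_simps)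
  have st0: "0 \<le> 2 * pi / real K" using K by simp
  show ?thesis
  proof (cases "y \<le> pi")
    case True
    moreover have "0 \<le> y" using y st0 by linarith
    ultimately show ?thesis using y st st0 by (intro cos_monotone_0_pi_le) auto
  next
    case False
    have "cos y = cos (2 * pi - y)" by (simp add: cos_diff)
    also have "\<dots> \<le> cos (2 * pi / real K)" using False y st st0 by (intro cos_monotone_0_pi_le) auto
    finally show ?thesis .
  qed
qed

lemma poly_rho:
  assumes K: "2 \<le> K"
  shows "1 - cos (2 * pi / real K) \<le> rho_ovr K (\<lambda>k. pt (2 * pi * real k / real K))"
proof (rule rho_ge)
  show "0 < K" using K by simp
  fix k assume k: "k < K"
  let ?P = "\<lambda>k. pt (2 * pi * real k / real K)"
  have ne: "?P ` ({..<K} - {k}) \<noteq> {}"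
  proof -
    have "(if k = 0 then 1 else 0) \<in> {..<K} - {k}" using K by auto
    thus ?thesis by blast
  qed
  have "\<forall>y\<in>?P ` ({..<K} - {k}). inner (?P k) y \<le> cos (2 * pi / real K)"
  proof
    fix y assume "y \<in> ?P ` ({..<K} - {k})"
    then obtain j where j: "j < K" "j \<noteq> k" "y = ?P j" by auto
    define n where "n = (if j < k then k - j else j - k)"
    have n: "1 \<le> n" "n \<le> K - 1" using j k by (auto simp: n_def)
    have "inner (?P k) y = cos (2 * pi * real k / real K - 2 * pi * real j / real K)"
      by (simp add: j pt_inner)
    also have "\<dots> = cos (2 * pi * real n / real K)"
    proof (cases "j < k")
      case True thus ?thesis by (simp add: n_def of_nat_diff diff_divide_distrib right_diff_distrib)
    next
      case False
      hence "2 * pi * real k / real K - 2 * pi * real j / real K = - (2 * pi * real n / real K)"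
        by (simp add: n_def of_nat_diff diff_divide_distrib right_diff_distrib)
      thus ?thesis by simp
    qed
    also have "\<dots> \<le> cos (2 * pi / real K)"
    proof (rule cos_le_step[OF K])
      have "1 \<le> real n" "real n \<le> real K - 1" using n K by auto
      thus "2 * pi / real K \<le> 2 * pi * real n / real K" using K
        by (simp add: divide_right_mono)
      have "2 * pi * real n \<le> 2 * pi * (real K - 1)" using \<open>real n \<le> real K - 1\<close> by simp
      thus "2 * pi * real n / real K \<le> 2 * pi - 2 * pi / real K" using K
        by (simp add: field_simps)
    qed
    finally show "inner (?P k) y \<le> cos (2 * pi / real K)" .
  qed
  from infdist_hull_ge[OF pt_norm ne this]
  show "1 - cos (2 * pi / real K) \<le> dist_conv (?P k) (?P ` ({..<K} - {k}))"
    by (simp add: dist_conv_def)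
qed



lemma part1:
  fixes W :: "nat \<Rightarrow> real^2"
  assumes sc: "softmax_code K W" and K2: "2 \<le> K"
  shows "\<exists>\<alpha>::real. W ` {..<K} = (\<lambda>k. pt (2*pi*real k / real K + \<alpha>)) ` {1..K}"
proof -
  define s0 where "s0 = pi / real K"
  define c where "c = 1 - cos (2 * pi / real K)"
  have Kr: "2 \<le> real K" using K2 by simp
  have s0r: "0 < s0" "s0 < pi" using Kr by (auto simp: s0_def field_simps)
  have sins0: "0 < sin s0" using s0r by (intro sin_gt_zero) auto
  have c2: "c = 2 * (sin s0)\<^sup>2"
  proof -
    have "2 * pi / real K = 2 * s0" by (simp add: s0_def)
    thus ?thesis by (simp add: c_def cos_double_sin)
  qed
  have cpos: "0 < c" using c2 sins0 by simp
  have ob: "oblique K (\<lambda>k. pt (2 * pi * real k / real K))" by (simp add: oblique_def)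
  have "c \<le> rho_ovr K W"
    using poly_rho[OF K2] sc ob unfolding softmax_code_def c_def by (meson order_trans)
  hence dk: "c \<le> infdist (W k) (convex hull (W ` ({..<K} - {k})))" if "k < K" for k
    using rho_le[OF that, of W] by (simp add: dist_conv_def)
  have ne: "{..<K} - {k} \<noteq> {}" for k
  proof -
    have "(if k = 0 then 1 else 0) \<in> {..<K} - {k}" using K2 by auto
    thus ?thesis by blast
  qed
  have "\<forall>k\<in>{..<K}. \<exists>t. 0 \<le> t \<and> t < 2 * pi \<and> W k = pt t"
    using sc unit_pt by (auto simp: softmax_code_def oblique_def)
  from bchoice[OF this] obtain \<theta> where th0: "\<forall>k\<in>{..<K}. 0 \<le> \<theta> k \<and> \<theta> k < 2 * pi \<and> W k = pt (\<theta> k)"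
    by blast
  have th: "0 \<le> \<theta> k \<and> \<theta> k < 2 * pi \<and> W k = pt (\<theta> k)" if "k < K" for k
    using th0 that by blast
  have thinj: "inj_on \<theta> {..<K}"
  proof (rule inj_onI, rule ccontr)
    fix j k assume jk: "j \<in> {..<K}" "k \<in> {..<K}" "\<theta> j = \<theta> k" "j \<noteq> k"
    hence "W j = W k" using th by auto
    hence "W k \<in> convex hull (W ` ({..<K} - {k}))" using jk by (intro hull_inc) (auto intro!: image_eqI[of _ _ j])
    hence "infdist (W k) (convex hull (W ` ({..<K} - {k}))) = 0" by simp
    thus False using dk[of k] jk cpos by simp
  qed
  define xs where "xs = sorted_list_of_set (\<theta> ` {..<K})"
  have lenxs: "length xs = K" using thinj by (simp add: xs_def card_image)
  have setxs: "set xs = \<theta> ` {..<K}" by (simp add: xs_def)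
  have sxs: "sorted_wrt (<) xs" by (simp add: xs_def)
  define x where "x i = xs ! i" for i
  have xmono: "x i < x j" if "i < j" "j < K" for i j
    using sorted_wrt_nth_less[OF sxs that(1)] that lenxs by (simp add: x_def)
  have xin: "x i \<in> \<theta> ` {..<K}" if "i < K" for i
    using that lenxs setxs by (metis nth_mem x_def)
  have xr: "0 \<le> x i" "x i < 2 * pi" if "i < K" for i
    using xin[OF that] th by auto
  have "\<forall>i\<in>{..<K}. \<exists>k. k < K \<and> \<theta> k = x i" using xin by force
  from bchoice[OF this] obtain \<kappa> where ka0: "\<forall>i\<in>{..<K}. \<kappa> i < K \<and> \<theta> (\<kappa> i) = x i" by blast
  have ka: "\<kappa> i < K \<and> \<theta> (\<kappa> i) = x i" if "i < K" for i using ka0 that by blast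
  have Wk: "W (\<kappa> i) = pt (x i)" if "i < K" for i using ka[OF that] th by metis
  have kainj: "\<kappa> i \<noteq> \<kappa> j" if "i < K" "j < K" "i \<noteq> j" for i j
  proof
    assume "\<kappa> i = \<kappa> j"
    hence "x i = x j" using ka that by metis
    thus False using xmono that by (metis less_irrefl nat_neq_iff)
  qed
  define a where "a i = (if i + 1 < K then x (i + 1) - x i else x 0 + 2 * pi - x (K - 1))" for i
  define nx where "nx i = (if i + 1 < K then i + 1 else 0)" for i :: nat
  define pv where "pv i = (if i = 0 then K - 1 else i - 1)" for i :: nat
  have apos: "0 < a i" if "i < K" for i
  proof (cases "i + 1 < K")
    case True thus ?thesis using xmono by (simp add: a_def)
  next
    case False thus ?thesis using xr[of 0] xr[of "K - 1"] K2 by (simp add: a_def)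
  qed
  have alt: "a i < 2 * pi" if "i < K" for i
  proof (cases "i + 1 < K")
    case True thus ?thesis using xr[of i] xr[of "i+1"] by (simp add: a_def)
  next
    case False thus ?thesis using xmono[of 0 "K - 1"] K2 by (simp add: a_def)
  qed
  have asum: "(\<Sum>i<K. a i) = 2 * pi"
  proof -
    obtain M where M: "K = Suc M" using K2 by (cases K) auto
    have "(\<Sum>i<K. a i) = (\<Sum>i<M. a i) + a M" by (simp add: M)
    also have "(\<Sum>i<M. a i) = (\<Sum>i<M. x (Suc i) - x i)"
      by (intro sum.cong) (auto simp: a_def M)
    also have "\<dots> = x M - x 0" by (rule sum_lessThan_telescope)
    finally show ?thesis by (simp add: a_def M)
  qed
  have nxl: "nx i < K" "nx i \<noteq> i" if "i < K" for i using that K2 by (auto simp: nx_def)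
  have pvl: "pv i < K" "pv i \<noteq> i" if "i < K" for i using that K2 by (auto simp: pv_def)
  have ptnx: "pt (x (nx i)) = pt (x i + a i)" if "i < K" for i
  proof (cases "i + 1 < K")
    case True thus ?thesis by (simp add: nx_def a_def)
  next
    case False
    hence "i = K - 1" using that by simp
    hence "x i + a i = x 0 + 2 * pi" using False by (simp add: a_def)
    thus ?thesis using False by (simp add: nx_def pt_2pi)
  qed
  have ptpv: "pt (x (pv i)) = pt (x i - a (pv i))" if "i < K" for i
  proof (cases "i = 0")
    case False
    hence "pv i + 1 < K" "Suc (pv i) = i" using that by (auto simp: pv_def)
    thus ?thesis by (simp add: a_def)
  next
    case True
    hence "\<not> pv i + 1 < K" "pv i = K - 1" using K2 by (auto simp: pv_def)
    hence "x i - a (pv i) = x (pv i) - 2 * pi" using True by (simp add: a_def)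
    thus ?thesis by (simp add: pt_2pi)
  qed
  have pvbij: "bij_betw pv {..<K} {..<K}"
  proof -
    have inj: "inj_on pv {..<K}"
      by (rule inj_onI) (auto simp: pv_def split: if_splits)
    moreover have "pv ` {..<K} \<subseteq> {..<K}" using pvl by auto
    ultimately have "pv ` {..<K} = {..<K}" by (intro endo_inj_surj) auto
    thus ?thesis using inj by (simp add: bij_betw_def)
  qed
  define L :: "real \<Rightarrow> real" where "L y = ln (sin y)" for y
  have local: "4 * L s0 \<le> L (a (pv i) / 2) + L (a i / 2) + 2 * L ((a (pv i) + a i) / 4)" if i: "i < K" for i
  proof -
    define S where "S = W ` ({..<K} - {\<kappa> i})"
    have "finite S" "S \<noteq> {}" using ne by (auto simp: S_def)
    from hull_sep[OF this cpos] dk[of "\<kappa> i"] ka[OF i]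
    obtain u where u: "norm u = 1" "\<forall>y\<in>S. c \<le> inner u (W (\<kappa> i)) - inner u y"
      by (auto simp: S_def)
    obtain \<beta> where \<beta>: "u = pt \<beta>" using unit_pt[OF u(1)] by auto
    have inS: "W (\<kappa> j) \<in> S" if "j < K" "j \<noteq> i" for j
      using ka that kainj[OF that(1) i that(2)] by (auto simp: S_def)
    define \<phi> where "\<phi> = x i - \<beta>"
    have h2: "c \<le> cos \<phi> - cos (\<phi> + a i)"
    proof -
      have "c \<le> inner u (W (\<kappa> i)) - inner u (W (\<kappa> (nx i)))"
        using u(2) inS[OF nxl[OF i]] by blast
      also have "\<dots> = cos (\<beta> - x i) - cos (\<beta> - (x i + a i))"
        using Wk[OF i] Wk[OF nxl(1)[OF i]] ptnx[OF i] by (simp add: \<beta> pt_inner)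
      also have "\<dots> = cos \<phi> - cos (\<phi> + a i)"
      proof -
        have "\<beta> - x i = - \<phi>" "\<beta> - (x i + a i) = - (\<phi> + a i)" by (simp_all add: \<phi>_def)
        thus ?thesis by (simp only: cos_minus)
      qed
      finally show ?thesis .
    qed
    have h1: "c \<le> cos \<phi> - cos (\<phi> - a (pv i))"
    proof -
      have "c \<le> inner u (W (\<kappa> i)) - inner u (W (\<kappa> (pv i)))"
        using u(2) inS[OF pvl[OF i]] by blast
      also have "\<dots> = cos (\<beta> - x i) - cos (\<beta> - (x i - a (pv i)))"
        using Wk[OF i] Wk[OF pvl(1)[OF i]] ptpv[OF i] by (simp add: \<beta> pt_inner)
      also have "\<dots> = cos \<phi> - cos (\<phi> - a (pv i))"
      proof -
        have "\<beta> - x i = - \<phi>" "\<beta> - (x i - a (pv i)) = - (\<phi> - a (pv i))" by (simp_all add: \<phi>_def)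
        thus ?thesis by (simp only: cos_minus)
      qed
      finally show ?thesis .
    qed
    have A: "0 < a (pv i)" "a (pv i) < 2 * pi" using apos alt pvl[OF i] by auto
    have B: "0 < a i" "a i < 2 * pi" using apos alt i by auto
    have ineq: "c * c \<le> 4 * sin (a (pv i)/2) * sin (a i/2) * (sin ((a (pv i) + a i) / 4))\<^sup>2"
      by (rule local_ineq[OF cpos A B h1 h2])
    have p1: "0 < sin (a (pv i)/2)" "0 < sin (a i/2)" "0 < sin ((a (pv i) + a i) / 4)"
      using A B by (auto intro!: sin_gt_zero)
    have "ln (c * c) \<le> ln (4 * sin (a (pv i)/2) * sin (a i/2) * (sin ((a (pv i) + a i) / 4))\<^sup>2)"
      using ineq cpos p1 by (subst ln_le_cancel_iff) auto
    also have "\<dots> = ln 4 + L (a (pv i) / 2) + L (a i / 2) + 2 * L ((a (pv i) + a i) / 4)"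
      using p1 by (simp add: L_def ln_mult ln_realpow)
    finally have "ln (c * c) \<le> ln 4 + L (a (pv i) / 2) + L (a i / 2) + 2 * L ((a (pv i) + a i) / 4)" .
    moreover have "ln (c * c) = ln 4 + 4 * L s0"
    proof -
      have "c * c = 4 * sin s0 ^ 4" by (simp add: c2 power2_eq_square power4_eq_xxxx)
      thus ?thesis using sins0 by (simp add: L_def ln_mult ln_realpow)
    qed
    ultimately show ?thesis by simp
  qed
  define cs where "cs = cos s0 / sin s0"
  have tang: "L y \<le> L s0 + cs * (y - s0)" if "0 < y" "y < pi" for y
    using ln_sin_tangent_le[OF s0r that] by (simp add: L_def cs_def)
  have sumL: "(\<Sum>i<K. L (a (pv i) / 2)) = (\<Sum>i<K. L (a i / 2))"
    using sum.reindex_bij_betw[OF pvbij, of "\<lambda>i. L (a i / 2)"] by simp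
  have sumA: "(\<Sum>i<K. a (pv i)) = 2 * pi"
    using sum.reindex_bij_betw[OF pvbij, of a] asum by simp
  have Ks0: "real K * s0 = pi" using Kr by (simp add: s0_def)
  have m: "(\<Sum>i<K. L ((a (pv i) + a i) / 4)) \<le> real K * L s0"
  proof -
    have "(\<Sum>i<K. L ((a (pv i) + a i) / 4)) \<le> (\<Sum>i<K. L s0 + cs * ((a (pv i) + a i) / 4 - s0))"
    proof (rule sum_mono)
      fix i assume "i \<in> {..<K}"
      hence "0 < a (pv i)" "a (pv i) < 2 * pi" "0 < a i" "a i < 2 * pi" using apos alt pvl by auto
      thus "L ((a (pv i) + a i) / 4) \<le> L s0 + cs * ((a (pv i) + a i) / 4 - s0)" by (intro tang) auto
    qed
    also have "\<dots> = real K * L s0 + cs * ((\<Sum>i<K. a (pv i)) / 4 + (\<Sum>i<K. a i) / 4 - real K * s0)"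
      by (simp add: sum.distrib sum_subtractf sum_distrib_left[symmetric] sum_divide_distrib[symmetric] algebra_simps)
    also have "\<dots> = real K * L s0" using sumA asum Ks0 by simp
    finally show ?thesis .
  qed
  have "(\<Sum>i<K. 4 * L s0) \<le> (\<Sum>i<K. L (a (pv i) / 2) + L (a i / 2) + 2 * L ((a (pv i) + a i) / 4))"
    using local by (intro sum_mono) auto
  hence lowsum: "real K * L s0 \<le> (\<Sum>i<K. L (a i / 2))"
    using m sumL by (simp add: sum.distrib sum_distrib_left[symmetric])
  have aeq: "a i = 2 * pi / real K" if "i < K" for i
  proof (rule ccontr)
    assume nq: "a i \<noteq> 2 * pi / real K"
    have "(\<Sum>i<K. L (a i / 2)) < (\<Sum>i<K. L s0 + cs * (a i / 2 - s0))"
    proof (rule sum_strict_mono_ex1)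
      show "\<forall>j\<in>{..<K}. L (a j / 2) \<le> L s0 + cs * (a j / 2 - s0)"
      proof
        fix j assume "j \<in> {..<K}"
        hence "0 < a j" "a j < 2 * pi" using apos alt by auto
        hence "0 < a j / 2" "a j / 2 < pi" by auto
        thus "L (a j / 2) \<le> L s0 + cs * (a j / 2 - s0)" by (rule tang)
      qed
      have "a i / 2 \<noteq> s0" using nq unfolding s0_def by (auto simp: field_simps)
      hence "L (a i / 2) < L s0 + cs * (a i / 2 - s0)"
        using ln_sin_tangent[OF s0r, of "a i / 2"] apos[OF that] alt[OF that] by (simp add: L_def cs_def)
      thus "\<exists>j\<in>{..<K}. L (a j / 2) < L s0 + cs * (a j / 2 - s0)" using that by blast
    qed simp
    also have "\<dots> = real K * L s0 + cs * ((\<Sum>i<K. a i) / 2 - real K * s0)"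
      by (simp add: sum.distrib sum_subtractf sum_distrib_left[symmetric] sum_divide_distrib[symmetric] algebra_simps)
    also have "\<dots> = real K * L s0" using asum Ks0 by simp
    finally show False using lowsum by simp
  qed
  have xeq: "x i = x 0 + 2 * pi * real i / real K" if "i < K" for i
    using that
  proof (induction i)
    case 0 thus ?case by simp
  next
    case (Suc i)
    hence "a i = x (Suc i) - x i" by (simp add: a_def)
    moreover have "a i = 2 * pi / real K" using aeq Suc by simp
    ultimately show ?case using Suc by (simp add: field_simps)
  qed
  have "W ` {..<K} = (\<lambda>k. pt (\<theta> k)) ` {..<K}" by (rule image_cong) (simp_all add: th)
  also have "\<dots> = pt ` \<theta> ` {..<K}" by (simp add: image_image)
  also have "\<theta> ` {..<K} = x ` {..<K}"
  proof -
    have "set xs = (\<lambda>i. xs ! i) ` {..<length xs}" by (auto simp: in_set_conv_nth image_iff)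
    thus ?thesis using setxs lenxs by (simp add: x_def)
  qed
  also have "pt ` x ` {..<K} = (\<lambda>i. pt (2 * pi * real i / real K + x 0)) ` {..<K}"
    unfolding image_image
  proof (rule image_cong)
    fix i assume "i \<in> {..<K}"
    hence "x i = x 0 + 2 * pi * real i / real K" by (intro xeq) simp
    thus "pt (x i) = pt (2 * pi * real i / real K + x 0)" by (simp only: add.commute)
  qed simp
  also have "\<dots> = (\<lambda>k. pt (2 * pi * real k / real K + x 0)) ` {1..K}"
  proof -
    have "pt (2 * pi * real K / real K + x 0) = pt (2 * pi * real 0 / real K + x 0)"
      using Kr pt_2pi(1)[of "x 0"] by (simp add: add.commute)
    hence e: "(\<lambda>k. pt (2 * pi * real k / real K + x 0)) K = (\<lambda>k. pt (2 * pi * real k / real K + x 0)) 0" .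
    have "{..<K} = insert 0 {1..<K}" "{1..K} = insert K {1..<K}" using K2 by auto
    thus ?thesis using e by simp
  qed
  finally show ?thesis by blast
qed


theorem mainTheorem4:
  fixes K :: nat
  assumes K2: "K \<ge> 2"
  shows
   "(\<forall>W :: nat \<Rightarrow> real^2. softmax_code K W \<longrightarrow>
       (\<exists>\<alpha>::real. W ` {..<K} =
          (\<lambda>k. vector [cos (2*pi*real k / real K + \<alpha>), sin (2*pi*real k / real K + \<alpha>)])
            ` {1..K}))
    \<and> (\<forall>W :: nat \<Rightarrow> real^'n. softmax_code K W \<longrightarrow> K \<le> CARD('n) + 1 \<longrightarrow>
         (\<forall>k<K. \<forall>k'<K. k \<noteq> k' \<longrightarrow> W k \<bullet> W k' = - 1 / (real K - 1)))
    \<and> (\<forall>W :: nat \<Rightarrow> real^'n. softmax_code K W \<longrightarrow> CARD('n) + 1 < K \<longrightarrow> K \<le> 2 * CARD('n) \<longrightarrow>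
         rho_ovr K W = 1
         \<and> (\<forall>V :: nat \<Rightarrow> real^'n. inj_on V {..<K} \<longrightarrow>
              (\<forall>k<K. \<exists>i. V k = axis i 1 \<or> V k = - axis i 1) \<longrightarrow> rho_ovr K V = 1))"
proof (intro conjI allI impI)
  fix W :: "nat \<Rightarrow> real^2" assume "softmax_code K W"
  from part1[OF this K2] show "\<exists>\<alpha>::real. W ` {..<K} =
          (\<lambda>k. vector [cos (2*pi*real k / real K + \<alpha>), sin (2*pi*real k / real K + \<alpha>)]) ` {1..K}"
    by (simp add: pt_def)
next
  fix W :: "nat \<Rightarrow> real^'n" and k k' assume "softmax_code K W" "K \<le> CARD('n) + 1" "k < K" "k' < K" "k \<noteq> k'"
  thus "W k \<bullet> W k' = - 1 / (real K - 1)" using part2[of K W] K2 by blast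
next
  fix W :: "nat \<Rightarrow> real^'n" assume "softmax_code K W" "CARD('n) + 1 < K" "K \<le> 2 * CARD('n)"
  thus "rho_ovr K W = 1" using part3 by blast
next
  fix W V :: "nat \<Rightarrow> real^'n" assume "softmax_code K W" "CARD('n) + 1 < K" "K \<le> 2 * CARD('n)"
    "inj_on V {..<K}" "\<forall>k<K. \<exists>i. V k = axis i 1 \<or> V k = - axis i 1"
  thus "rho_ovr K V = 1" using part3 by blast
qed

end
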